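(* Let $(M,F)$ be a Finsler manifold with finite uniform constant $\Lambda_F$. Then the uniform constant $\Lambda_{F^*}$ of the dual metric $F^*$ equals $\Lambda_F$.
   Context: $g_y$ is the fundamental tensor of $F$ at $y\ne0$; $\Lambda_F=\sup\{g_X(Y,Y)/g_Z(Y,Y):X,Y,Z\in S_xM,\ x\in M\}$, where $S_xM=\{F(x,\cdot)=1\}$. The Legendre transformation is $\mathcal L(y)=g_y(y,\cdot)$; the dual metric is $F^*(\xi)=F(\mathcal L^{-1}\xi)$ on $T^*M$, with fundamental tensor $g^*_\xi=\frac12\,\mathrm{Hess}(F^{*2})(\xi)$, which is the inverse (dual) inner product of $g_{\mathcal L^{-1}(\xi)}$. $\Lambda_{F^*}=\sup\{g^*_\xi(\eta,\eta)/g^*_\zeta(\eta,\eta):\xi,\eta,\zeta\in T^*_xM,\ F^*(\xi)=F^*(\eta)=F^*(\zeta)=1,\ x\in M\}$. *)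

theory Defs
  imports "HOL-Analysis.Analysis"
begin

fun Ck_on :: "nat \<Rightarrow> 'v::euclidean_space set \<Rightarrow> ('v \<Rightarrow> real) \<Rightarrow> bool" where
  "Ck_on 0 S f = continuous_on S f"
| "Ck_on (Suc k) S f =
     (f differentiable_on S \<and> (\<forall>u. Ck_on k S (\<lambda>z. frechet_derivative f (at z) u)))"

definition smooth_on :: "'v::euclidean_space set \<Rightarrow> ('v \<Rightarrow> real) \<Rightarrow> bool" where
  "smooth_on S f \<longleftrightarrow> (\<forall>k. Ck_on k S f)"

definition hess :: "('v::euclidean_space \<Rightarrow> real) \<Rightarrow> 'v \<Rightarrow> 'v \<Rightarrow> 'v \<Rightarrow> real" where
  "hess f y u v = frechet_derivative (\<lambda>z. frechet_derivative f (at z) u) (at y) v"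

definition fund_tensor :: "('v::euclidean_space \<Rightarrow> real) \<Rightarrow> 'v \<Rightarrow> 'v \<Rightarrow> 'v \<Rightarrow> real" where
  "fund_tensor F y u v = (1/2) * hess (\<lambda>z. (F z)^2) y u v"

definition minkowski_norm :: "('v::euclidean_space \<Rightarrow> real) \<Rightarrow> bool" where
  "minkowski_norm F \<longleftrightarrow>
     (\<forall>y. F y \<ge> 0) \<and> continuous_on UNIV F \<and>
     smooth_on (UNIV - {0}) F \<and>
     (\<forall>y. \<forall>c>0. F (c *\<^sub>R y) = c * F y) \<and>
     (\<forall>y. y \<noteq> 0 \<longrightarrow> (\<forall>u. u \<noteq> 0 \<longrightarrow> fund_tensor F y u u > 0))"

text \<open>Covectors are identified with vectors through the inner product: xi corresponds to
  the linear functional (\<lambda>v. xi \<bullet> v).  Legendre transformation L(y) = g_y(y,.), with L(0)=0.\<close>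
definition legendre :: "('v::euclidean_space \<Rightarrow> real) \<Rightarrow> 'v \<Rightarrow> 'v" where
  "legendre F y = (if y = 0 then 0 else (\<Sum>b\<in>Basis. fund_tensor F y y b *\<^sub>R b))"

definition dual_metric :: "('v::euclidean_space \<Rightarrow> real) \<Rightarrow> 'v \<Rightarrow> real" where
  "dual_metric F \<xi> = F (inv (legendre F) \<xi>)"

definition uniform_const :: "'m set \<Rightarrow> ('m \<Rightarrow> 'v::euclidean_space \<Rightarrow> real) \<Rightarrow> ereal" where
  "uniform_const M F = Sup {ereal (fund_tensor (F x) X Y Y / fund_tensor (F x) Z Y Y) | x X Y Z.
      x \<in> M \<and> F x X = 1 \<and> F x Y = 1 \<and> F x Z = 1}"

end

theory Submission
  imports Defs
begin

lemma line_deriv: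
  assumes "(f has_derivative f') (at (a + s *\<^sub>R u))"
  shows "((\<lambda>t. f (a + t *\<^sub>R u)) has_real_derivative f' u) (at s)"
proof -
  have "((\<lambda>t. a + t *\<^sub>R u) has_derivative (\<lambda>t. t *\<^sub>R u)) (at s)"
    by (auto intro!: derivative_eq_intros)
  from has_derivative_compose[OF this assms]
  have "((\<lambda>t. f (a + t *\<^sub>R u)) has_derivative (\<lambda>t. f' (t *\<^sub>R u))) (at s)" .
  moreover have "(\<lambda>t. f' (t *\<^sub>R u)) = (\<lambda>t. f' u * t)"
    using has_derivative_bounded_linear[OF assms]
    by (auto simp: linear_scale[OF bounded_linear.linear] mult.commute)
  ultimately show ?thesis unfolding has_field_derivative_def by simp
qed

lemma schwarz_aux:
  fixes f :: "'a::euclidean_space \<Rightarrow> real"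
  assumes S: "ball y r \<subseteq> S"
   and d1: "\<And>z. z\<in>S \<Longrightarrow> (f has_derivative df z) (at z)"
   and d2: "\<And>z u. z\<in>S \<Longrightarrow> ((\<lambda>w. df w u) has_derivative d2f z u) (at z)"
   and h: "0 < h" "h * (norm u + norm v) < r"
  shows "\<exists>s t. 0 < s \<and> s < h \<and> 0 < t \<and> t < h \<and>
     f (y + h *\<^sub>R u + h *\<^sub>R v) - f (y + h *\<^sub>R u) - f (y + h *\<^sub>R v) + f y
       = h * h * d2f (y + s *\<^sub>R u + t *\<^sub>R v) u v"
proof -
  have inS: "y + s *\<^sub>R u + t *\<^sub>R v \<in> S" if "0 \<le> s" "s \<le> h" "0 \<le> t" "t \<le> h" for s t
  proof -
    have "norm (s *\<^sub>R u + t *\<^sub>R v) \<le> s * norm u + t * norm v"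
      using that by (metis abs_of_nonneg norm_scaleR norm_triangle_le order_refl add_mono)
    also have "\<dots> \<le> h * norm u + h * norm v"
      using that by (intro add_mono mult_right_mono) auto
    also have "\<dots> < r" using h by (simp add: algebra_simps)
    moreover have "dist y (y + (s *\<^sub>R u + t *\<^sub>R v)) = norm (s *\<^sub>R u + t *\<^sub>R v)"
      by (metis add_diff_cancel_left' dist_commute dist_norm)
    ultimately have "y + (s *\<^sub>R u + t *\<^sub>R v) \<in> ball y r" by simp
    then show ?thesis using S by (auto simp: add.assoc)
  qed
  define p where "p s = f (y + s *\<^sub>R u + h *\<^sub>R v) - f (y + s *\<^sub>R u)" for s
  have pd: "(p has_real_derivative (df (y + s *\<^sub>R u + h *\<^sub>R v) u - df (y + s *\<^sub>R u) u)) (at s)"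
    if "0 \<le> s" "s \<le> h" for s
  proof -
    have 1: "((\<lambda>s. f ((y + h *\<^sub>R v) + s *\<^sub>R u)) has_real_derivative df (y + s *\<^sub>R u + h *\<^sub>R v) u) (at s)"
      by (rule line_deriv) (use d1 inS[of s h] that h in \<open>auto simp: algebra_simps\<close>)
    have 2: "((\<lambda>s. f (y + s *\<^sub>R u)) has_real_derivative df (y + s *\<^sub>R u) u) (at s)"
      by (rule line_deriv) (use d1 inS[of s 0] that h in \<open>auto simp: algebra_simps\<close>)
    show ?thesis unfolding p_def using DERIV_diff[OF 1 2] by (simp add: algebra_simps)
  qed
  from MVT2[OF h(1) pd] obtain s where s: "0 < s" "s < h"
    "p h - p 0 = (h - 0) * (df (y + s *\<^sub>R u + h *\<^sub>R v) u - df (y + s *\<^sub>R u) u)" by auto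
  define q where "q t = df (y + s *\<^sub>R u + t *\<^sub>R v) u" for t
  have qd: "(q has_real_derivative d2f (y + s *\<^sub>R u + t *\<^sub>R v) u v) (at t)"
    if "0 \<le> t" "t \<le> h" for t
    unfolding q_def by (rule line_deriv) (use d2 inS[of s t] that s in auto)
  from MVT2[OF h(1) qd] obtain t where t: "0 < t" "t < h"
    "q h - q 0 = (h - 0) * d2f (y + s *\<^sub>R u + t *\<^sub>R v) u v" by auto
  have "f (y + h *\<^sub>R u + h *\<^sub>R v) - f (y + h *\<^sub>R u) - f (y + h *\<^sub>R v) + f y = p h - p 0"
    by (simp add: p_def)
  also have "\<dots> = h * (q h - q 0)" using s(3) by (simp add: q_def)
  also have "\<dots> = h * h * d2f (y + s *\<^sub>R u + t *\<^sub>R v) u v" using t(3) by simp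
  finally show ?thesis using s t by blast
qed

lemma schwarz:
  fixes f :: "'a::euclidean_space \<Rightarrow> real"
  assumes S: "open S" "y \<in> S"
   and d1: "\<And>z. z\<in>S \<Longrightarrow> (f has_derivative df z) (at z)"
   and d2: "\<And>z u. z\<in>S \<Longrightarrow> ((\<lambda>w. df w u) has_derivative d2f z u) (at z)"
   and c2: "\<And>u v. continuous_on S (\<lambda>z. d2f z u v)"
  shows "d2f y u v = d2f y v u"
proof (rule ccontr)
  assume ne: "d2f y u v \<noteq> d2f y v u"
  define e where "e = \<bar>d2f y u v - d2f y v u\<bar> / 2"
  have e: "e > 0" using ne by (simp add: e_def)
  obtain r where r: "r > 0" "ball y r \<subseteq> S" using S openE by blast
  have "isCont (\<lambda>z. d2f z u v) y" using c2 S continuous_on_eq_continuous_at by blast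
  then obtain d1 where dd1: "d1 > 0" "\<And>z. dist z y < d1 \<Longrightarrow> \<bar>d2f z u v - d2f y u v\<bar> < e"
    unfolding continuous_at_eps_delta using e by (metis dist_real_def)
  have "isCont (\<lambda>z. d2f z v u) y" using c2 S continuous_on_eq_continuous_at by blast
  then obtain d2 where dd2: "d2 > 0" "\<And>z. dist z y < d2 \<Longrightarrow> \<bar>d2f z v u - d2f y v u\<bar> < e"
    unfolding continuous_at_eps_delta using e by (metis dist_real_def)
  define m where "m = min r (min d1 d2)"
  have m: "m > 0" using r dd1 dd2 by (simp add: m_def)
  define h where "h = m / (2 * (norm u + norm v + 1))"
  have h: "h > 0" using m unfolding h_def by (intro divide_pos_pos) (auto intro: add_nonneg_pos)
  have hm: "h * (norm u + norm v) < m"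
  proof -
    have "h * (norm u + norm v) \<le> h * (norm u + norm v + 1)" using h by simp
    also have "\<dots> = m / 2" unfolding h_def
    proof -
      have "norm u + norm v + 1 \<noteq> 0" using norm_ge_zero[of u] norm_ge_zero[of v] by linarith
      moreover have "\<And>N::real. N \<noteq> 0 \<Longrightarrow> m / (2 * N) * N = m / 2" by simp
      ultimately show "m / (2 * (norm u + norm v + 1)) * (norm u + norm v + 1) = m / 2" by blast
    qed
    finally show ?thesis using m by simp
  qed
  have hr: "h * (norm u + norm v) < r" using hm by (simp add: m_def)
  obtain s t where st: "0 < s" "s < h" "0 < t" "t < h"
    "f (y + h *\<^sub>R u + h *\<^sub>R v) - f (y + h *\<^sub>R u) - f (y + h *\<^sub>R v) + f y
       = h * h * d2f (y + s *\<^sub>R u + t *\<^sub>R v) u v"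
    using schwarz_aux[OF r(2) d1 d2 h hr] by blast
  obtain s' t' where st': "0 < s'" "s' < h" "0 < t'" "t' < h"
    "f (y + h *\<^sub>R v + h *\<^sub>R u) - f (y + h *\<^sub>R v) - f (y + h *\<^sub>R u) + f y
       = h * h * d2f (y + s' *\<^sub>R v + t' *\<^sub>R u) v u"
    using schwarz_aux[OF r(2) d1 d2 h, of v u] hr by (auto simp: add.commute)
  have eq: "d2f (y + s *\<^sub>R u + t *\<^sub>R v) u v = d2f (y + s' *\<^sub>R v + t' *\<^sub>R u) v u"
    using st(5) st'(5) h by (simp add: algebra_simps)
  have near: "dist (y + a *\<^sub>R w1 + b *\<^sub>R w2) y < m"
    if "0 < a" "a < h" "0 < b" "b < h" "norm w1 + norm w2 = norm u + norm v" for a b w1 w2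
  proof -
    have "dist (y + a *\<^sub>R w1 + b *\<^sub>R w2) y = norm (a *\<^sub>R w1 + b *\<^sub>R w2)"
      by (simp add: dist_norm)
    also have "\<dots> \<le> a * norm w1 + b * norm w2"
      using that by (metis abs_of_pos norm_scaleR norm_triangle_le order_refl add_mono)
    also have "\<dots> \<le> h * norm w1 + h * norm w2"
      using that by (intro add_mono mult_right_mono) auto
    also have "\<dots> = h * (norm w1 + norm w2)" by (simp add: algebra_simps)
    also have "\<dots> < m" using hm that by simp
    finally show ?thesis .
  qed
  have A: "\<bar>d2f (y + s *\<^sub>R u + t *\<^sub>R v) u v - d2f y u v\<bar> < e"
    using dd1(2) near[OF st(1-4)] m_def by fastforce
  have B: "\<bar>d2f (y + s' *\<^sub>R v + t' *\<^sub>R u) v u - d2f y v u\<bar> < e"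
    using dd2(2) near[OF st'(1-4), of v u] m_def by (fastforce simp: add.commute)
  from A B eq have "\<bar>d2f y u v - d2f y v u\<bar> < 2 * e" by linarith
  then show False by (simp add: e_def)
qed

definition spd :: "('v::euclidean_space \<Rightarrow> 'v) \<Rightarrow> bool" where
  "spd P \<longleftrightarrow> linear P \<and> (\<forall>u v. inner (P u) v = inner u (P v)) \<and> (\<forall>v. v \<noteq> 0 \<longrightarrow> inner (P v) v > 0)"

lemma spd_nonneg: "spd P \<Longrightarrow> inner (P v) v \<ge> 0"
  unfolding spd_def by (cases "v = 0") (auto simp: linear_0 less_imp_le)

lemma spd_bij: assumes "spd P" shows "bij P"
proof -
  have lin: "linear P" using assms by (simp add: spd_def)
  have "inj P" unfolding linear_injective_0[OF lin]
  proof (intro allI impI)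
    fix x assume "P x = 0"
    then have "inner (P x) x = 0" by simp
    then show "x = 0" using assms unfolding spd_def by (metis less_irrefl)
  qed
  moreover have "surj P" using eucl.linear_injective_imp_surjective[OF lin \<open>inj P\<close>] by simp
  ultimately show ?thesis by (simp add: bij_def)
qed

lemma spd_inv: assumes "spd P" shows "spd (inv P)"
proof -
  have lin: "linear P" and sym: "\<And>u v. inner (P u) v = inner u (P v)"
    and pos: "\<And>v. v \<noteq> 0 \<Longrightarrow> inner (P v) v > 0" using assms by (auto simp: spd_def)
  have b: "bij P" by (rule spd_bij[OF assms])
  have PI: "P (inv P w) = w" for w using b by (simp add: bij_def surj_f_inv_f)
  have IP: "inv P (P w) = w" for w using b by (simp add: bij_def inv_f_f)
  have "linear (inv P)" using eucl.inj_linear_imp_inv_linear[OF lin] b by (simp add: bij_def)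
  moreover have "inner (inv P u) v = inner u (inv P v)" for u v
    using sym[of "inv P u" "inv P v"] by (simp add: PI)
  moreover have "inner (inv P v) v > 0" if "v \<noteq> 0" for v
  proof -
    have "inv P v \<noteq> 0" using that PI[of v] lin by (metis linear_0)
    from pos[OF this] show ?thesis by (simp add: PI inner_commute)
  qed
  ultimately show ?thesis by (simp add: spd_def)
qed

lemma spd_cs:
  assumes "spd P"
  shows "(inner (P a) x)^2 \<le> inner (P a) a * inner (P x) x"
proof (cases "x = 0")
  case True then show ?thesis using assms by (simp add: spd_def linear_0)
next
  case False
  have lin: "linear P" and sym: "\<And>u v. inner (P u) v = inner u (P v)"
    and pos: "\<And>v. v \<noteq> 0 \<Longrightarrow> inner (P v) v > 0" using assms by (auto simp: spd_def)
  define B where "B = inner (P x) x"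
  have B: "B > 0" using pos[OF False] by (simp add: B_def)
  define t where "t = inner (P a) x / B"
  have "0 \<le> inner (P (a - t *\<^sub>R x)) (a - t *\<^sub>R x)" by (rule spd_nonneg[OF assms])
  also have "\<dots> = inner (P a) a - 2 * t * inner (P a) x + t * t * B"
  proof -
    have e1: "P (a - t *\<^sub>R x) = P a - t *\<^sub>R P x" using lin by (simp add: linear_diff linear_scale)
    have e2: "inner (P x) a = inner (P a) x" using sym[of x a] by (simp add: inner_commute)
    show ?thesis unfolding e1 by (simp add: inner_diff_left inner_diff_right B_def algebra_simps e2)
  qed
  also have "\<dots> = inner (P a) a - (inner (P a) x)^2 / B"
    using B by (simp add: t_def field_simps power2_eq_square)
  finally have "(inner (P a) x)^2 / B \<le> inner (P a) a" by simp
  then show ?thesis using B by (simp add: B_def divide_le_eq mult.commute)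
qed

lemma spd_inv_mono:
  assumes P: "spd P" and Q: "spd Q" and c: "c \<ge> 0"
    and le: "\<And>v. inner (P v) v \<le> c * inner (Q v) v"
  shows "inner (inv Q w) w \<le> c * inner (inv P w) w"
proof -
  have PI: "P (inv P w) = w" using spd_bij[OF P] by (simp add: bij_def surj_f_inv_f)
  have QI: "Q (inv Q w) = w" using spd_bij[OF Q] by (simp add: bij_def surj_f_inv_f)
  define a where "a = inv P w"
  define x where "x = inv Q w"
  define s where "s = inner w x"
  have s0: "s \<ge> 0" using spd_nonneg[OF Q, of x] QI by (simp add: s_def x_def)
  define A where "A = inner w a"
  have A0: "A \<ge> 0" using spd_nonneg[OF P, of a] PI by (simp add: A_def a_def)
  have "s^2 = (inner (P a) x)^2" using PI by (simp add: s_def a_def)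
  also have "\<dots> \<le> inner (P a) a * inner (P x) x" by (rule spd_cs[OF P])
  also have "\<dots> \<le> A * (c * inner (Q x) x)"
    using PI A0 le[of x] by (auto simp: A_def a_def intro!: mult_left_mono)
  also have "\<dots> = (c * A) * s" using QI by (simp add: s_def x_def)
  finally have ss: "s * s \<le> (c * A) * s" by (simp add: power2_eq_square)
  have "s \<le> c * A"
  proof (cases "s = 0")
    case True then show ?thesis using c A0 by simp
  next
    case False then have "s > 0" using s0 by simp
    then show ?thesis using ss by (simp add: mult_le_cancel_right)
  qed
  then show ?thesis by (simp add: s_def A_def x_def a_def inner_commute)
qed

lemma deriv_agree:
  assumes "(f has_real_derivative D1) (at x)" "(g has_real_derivative D2) (at x)"
    "open S" "x \<in> S" "\<And>y. y \<in> S \<Longrightarrow> f y = g y"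
  shows "D1 = D2"
proof -
  have "(g has_real_derivative D1) (at x)"
    by (rule has_field_derivative_transform_within_open[OF assms(1,3,4,5)])
  then show ?thesis using assms(2) DERIV_unique by blast
qed

lemma grad_rep:
  fixes l :: "'v::euclidean_space \<Rightarrow> real"
  assumes "linear l"
  shows "inner (\<Sum>b\<in>Basis. l b *\<^sub>R b) v = l v"
proof -
  have "l v = l (\<Sum>b\<in>Basis. (v \<bullet> b) *\<^sub>R b)" by (simp add: euclidean_representation)
  also have "\<dots> = (\<Sum>b\<in>Basis. (v \<bullet> b) * l b)"
    using assms by (simp add: linear_sum linear_scale)
  moreover have "inner (\<Sum>b\<in>Basis. l b *\<^sub>R b) v = (\<Sum>b\<in>Basis. l b * (b \<bullet> v))"
    by (simp add: inner_sum_left)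
  moreover have "\<dots> = (\<Sum>b\<in>Basis. (v \<bullet> b) * l b)"
    by (rule sum.cong) (auto simp: inner_commute)
  ultimately show ?thesis by simp
qed

lemma open_S0: "open (UNIV - {0::'v::euclidean_space})"
  by (simp add: open_Diff)

locale mink =
  fixes F :: "'v::euclidean_space \<Rightarrow> real"
  assumes mn: "minkowski_norm F"
begin

definition dF where "dF z = frechet_derivative F (at z)"
definition hF where "hF z u v = frechet_derivative (\<lambda>w. dF w u) (at z) v"

lemma nonneg: "F y \<ge> 0" using mn by (simp add: minkowski_norm_def)
lemma contF: "continuous_on UNIV F" using mn by (simp add: minkowski_norm_def)
lemma homF: "c > 0 \<Longrightarrow> F (c *\<^sub>R y) = c * F y" using mn by (simp add: minkowski_norm_def)
lemma posdef: "y \<noteq> 0 \<Longrightarrow> u \<noteq> 0 \<Longrightarrow> fund_tensor F y u u > 0"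
  using mn by (simp add: minkowski_norm_def)

lemma F0: "F 0 = 0"
  using homF[of 2 0] by simp

lemma Ck3: "F differentiable_on (UNIV - {0}) \<and>
   (\<forall>u. (\<lambda>z. dF z u) differentiable_on (UNIV - {0}) \<and>
      (\<forall>v. (\<lambda>z. hF z u v) differentiable_on (UNIV - {0})))"
proof -
  have "Ck_on (Suc (Suc (Suc 0))) (UNIV - {0}) F"
    using mn by (simp add: minkowski_norm_def smooth_on_def)
  then show ?thesis by (simp add: dF_def hF_def)
qed

lemma D1: assumes "z \<noteq> 0" shows "(F has_derivative dF z) (at z)"
proof -
  have "F differentiable at z" using Ck3 differentiable_on_eq_differentiable_at[OF open_S0] assms by auto
  then show ?thesis unfolding dF_def using frechet_derivative_works by blast
qed

lemma D2: assumes "z \<noteq> 0" shows "((\<lambda>w. dF w u) has_derivative hF z u) (at z)"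
proof -
  have "(\<lambda>w. dF w u) differentiable at z" using Ck3 differentiable_on_eq_differentiable_at[OF open_S0] assms by auto
  then show ?thesis unfolding hF_def[abs_def] using frechet_derivative_works by blast
qed

lemma C2: "continuous_on (UNIV - {0}) (\<lambda>z. hF z u v)"
  using Ck3 differentiable_imp_continuous_on by blast

lemma lin1: "z \<noteq> 0 \<Longrightarrow> linear (dF z)"
  using D1 has_derivative_linear by blast
lemma lin2: "z \<noteq> 0 \<Longrightarrow> linear (hF z u)"
  using D2 has_derivative_linear by blast

lemma hF_sym: "z \<noteq> 0 \<Longrightarrow> hF z u v = hF z v u"
  by (rule schwarz[OF open_S0, where df = dF and f = F]) (use D1 D2 C2 in auto)

lemma dF_hom: assumes "y \<noteq> 0" "c > 0" shows "dF (c *\<^sub>R y) u = dF y u"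
proof -
  have cy: "c *\<^sub>R y \<noteq> 0" using assms by simp
  have "((\<lambda>w. c *\<^sub>R w) has_derivative (\<lambda>w. c *\<^sub>R w)) (at y)"
    by (auto intro!: derivative_eq_intros)
  from has_derivative_compose[OF this D1[OF cy]]
  have 1: "((\<lambda>w. F (c *\<^sub>R w)) has_derivative (\<lambda>v. dF (c *\<^sub>R y) (c *\<^sub>R v))) (at y)" .
  have 2: "((\<lambda>w. F (c *\<^sub>R w)) has_derivative (\<lambda>v. c * dF y v)) (at y)"
  proof -
    have "((\<lambda>w. c * F w) has_derivative (\<lambda>v. c * dF y v)) (at y)"
      using D1[OF assms(1)] by (auto intro!: derivative_eq_intros)
    then show ?thesis using homF[OF assms(2)] by simp
  qed
  have "(\<lambda>v. dF (c *\<^sub>R y) (c *\<^sub>R v)) = (\<lambda>v. c * dF y v)"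
    using has_derivative_unique[OF 1 2] .
  then have "dF (c *\<^sub>R y) (c *\<^sub>R u) = c * dF y u" by meson
  then show ?thesis using assms lin1[OF cy] by (simp add: linear_scale)
qed

lemma euler1: assumes "y \<noteq> 0" shows "dF y y = F y"
proof -
  have "((\<lambda>t. F (0 + t *\<^sub>R y)) has_real_derivative dF y y) (at 1)"
    by (rule line_deriv) (use D1 assms in simp)
  moreover have "((\<lambda>t. t * F y) has_real_derivative F y) (at 1)"
    by (auto intro!: derivative_eq_intros)
  ultimately show ?thesis
    by (rule deriv_agree[where S = "{0<..}"]) (auto simp: homF)
qed

lemma hF_ray: assumes "y \<noteq> 0" shows "hF y u y = 0"
proof -
  have "((\<lambda>t. dF (0 + t *\<^sub>R y) u) has_real_derivative hF y u y) (at 1)"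
    by (rule line_deriv[where f = "\<lambda>w. dF w u"]) (use D2 assms in simp)
  moreover have "((\<lambda>t. dF y u) has_real_derivative 0) (at 1)"
    by (auto intro!: derivative_eq_intros)
  ultimately show ?thesis
    by (rule deriv_agree[where S = "{0<..}"]) (auto simp: dF_hom assms)
qed

definition g where "g z u v = dF z u * dF z v + F z * hF z u v"

lemma dPhi: "w \<noteq> 0 \<Longrightarrow> ((\<lambda>z. (F z)^2) has_derivative (\<lambda>v. 2 * F w * dF w v)) (at w)"
proof -
  assume w: "w \<noteq> 0"
  have "((\<lambda>z. F z * F z) has_derivative (\<lambda>v. F w * dF w v + dF w v * F w)) (at w)"
    by (rule has_derivative_mult[OF D1[OF w] D1[OF w]])
  then show ?thesis by (simp add: power2_eq_square algebra_simps)
qed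

lemma fund_tensor_eq: assumes "z \<noteq> 0" shows "fund_tensor F z u v = g z u v"
proof -
  have eq: "frechet_derivative (\<lambda>z. (F z)^2) (at w) u = 2 * F w * dF w u" if "w \<in> UNIV - {0}" for w
  proof -
    have "w \<noteq> 0" using that by auto
    from frechet_derivative_at[OF dPhi[OF this]] show ?thesis using fun_cong by metis
  qed
  have a: "((\<lambda>w. 2 * F w) has_derivative (\<lambda>v. 2 * dF z v)) (at z)"
    by (auto intro!: derivative_eq_intros D1 assms)
  have "((\<lambda>w. 2 * F w * dF w u) has_derivative (\<lambda>v. 2 * F z * hF z u v + 2 * dF z v * dF z u)) (at z)"
    by (rule has_derivative_mult[OF a D2[OF assms]])
  then have "((\<lambda>w. frechet_derivative (\<lambda>z. (F z)^2) (at w) u) has_derivative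
       (\<lambda>v. 2 * F z * hF z u v + 2 * dF z v * dF z u)) (at z)"
    by (rule has_derivative_transform_within_open[OF _ open_S0]) (use assms eq in auto)
  from frechet_derivative_at[OF this]
  have "hess (\<lambda>z. (F z)^2) z u v = 2 * F z * hF z u v + 2 * dF z v * dF z u"
    unfolding hess_def by (metis (no_types, lifting))
  then show ?thesis by (simp add: fund_tensor_def g_def algebra_simps)
qed

end

context mink begin

lemma g_sym: "z \<noteq> 0 \<Longrightarrow> g z u v = g z v u"
  by (simp add: g_def hF_sym)

lemma g_lin2: assumes "z \<noteq> 0" shows "linear (g z u)"
  unfolding linear_iff g_def[abs_def] using lin1[OF assms] lin2[OF assms, of u]
  by (simp add: linear_add linear_scale algebra_simps)

lemma g_lin1: assumes "z \<noteq> 0" shows "linear (\<lambda>u. g z u v)"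
  using g_lin2[OF assms, of v] g_sym[OF assms] by (simp add: linear_iff)

lemma g_pos: "z \<noteq> 0 \<Longrightarrow> v \<noteq> 0 \<Longrightarrow> g z v v > 0"
  using posdef fund_tensor_eq by auto

lemma g_yv: assumes "y \<noteq> 0" shows "g y y v = F y * dF y v"
  using hF_sym[OF assms, of y v] hF_ray[OF assms, of v] euler1[OF assms]
  by (simp add: g_def)

lemma g_yy: assumes "y \<noteq> 0" shows "g y y y = (F y)^2"
  using g_yv[OF assms] euler1[OF assms] by (simp add: power2_eq_square)

lemma Fpos: assumes "y \<noteq> 0" shows "F y > 0"
proof -
  have "g y y y > 0" by (rule g_pos[OF assms assms])
  then have "F y \<noteq> 0" using g_yy[OF assms] by auto
  then show ?thesis using nonneg[of y] by simp
qed

lemma leg_eq: assumes "y \<noteq> 0" shows "legendre F y = (\<Sum>b\<in>Basis. (F y * dF y b) *\<^sub>R b)"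
  using assms by (simp add: legendre_def fund_tensor_eq g_yv)

lemma leg_inner: assumes "y \<noteq> 0" shows "inner (legendre F y) v = F y * dF y v"
proof -
  have l: "linear (dF y)" using lin1[OF assms] .
  have "linear (\<lambda>b. F y * dF y b)"
    by (simp add: linear_iff linear_add[OF l] linear_scale[OF l] distrib_left mult.left_commute)
  from grad_rep[OF this] show ?thesis by (simp add: leg_eq assms)
qed

lemma leg_inner_self: "inner (legendre F y) y = (F y)^2"
proof (cases "y = 0")
  case True then show ?thesis by (simp add: legendre_def F0)
next
  case False then show ?thesis using leg_inner[OF False, of y] euler1[OF False] by (simp add: power2_eq_square)
qed

definition G where "G z v = (\<Sum>b\<in>Basis. g z b v *\<^sub>R b)"

lemma G_inner: assumes "z \<noteq> 0" shows "inner (G z v) w = g z w v"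
  unfolding G_def by (rule grad_rep[OF g_lin1[OF assms]])

lemma G_lin: assumes "z \<noteq> 0" shows "linear (G z)"
  unfolding linear_iff G_def
  by (simp add: linear_add[OF g_lin2[OF assms]] linear_scale[OF g_lin2[OF assms]]
        scaleR_add_left sum.distrib scaleR_sum_right)

lemma G_spd: assumes "z \<noteq> 0" shows "spd (G z)"
proof -
  have "inner (G z u) v = inner u (G z v)" for u v
    using G_inner[OF assms, of u v] G_inner[OF assms, of v u] g_sym[OF assms, of v u]
    by (simp add: inner_commute)
  moreover have "inner (G z v) v > 0" if "v \<noteq> 0" for v
    using G_inner[OF assms, of v v] g_pos[OF assms that] by simp
  ultimately show ?thesis unfolding spd_def using G_lin[OF assms] by blast
qed

lemma leg_deriv: assumes "y \<noteq> 0" shows "(legendre F has_derivative G y) (at y)"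
proof -
  have c: "((\<lambda>w. (F w * dF w b) *\<^sub>R b) has_derivative (\<lambda>v. (F y * hF y b v + dF y v * dF y b) *\<^sub>R b)) (at y)" for b
    using has_derivative_scaleR_left[OF has_derivative_mult[OF D1[OF assms] D2[OF assms]], of b] .
  have "((\<lambda>w. \<Sum>b\<in>Basis. (F w * dF w b) *\<^sub>R b) has_derivative
        (\<lambda>v. \<Sum>b\<in>Basis. (F y * hF y b v + dF y v * dF y b) *\<^sub>R b)) (at y)"
    by (rule has_derivative_sum) (rule c)
  moreover have "(\<lambda>v. \<Sum>b\<in>Basis. (F y * hF y b v + dF y v * dF y b) *\<^sub>R b) = G y"
  proof
    fix v
    show "(\<Sum>b\<in>Basis. (F y * hF y b v + dF y v * dF y b) *\<^sub>R b) = G y v"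
      unfolding G_def g_def by (rule sum.cong) (simp_all add: add.commute mult.commute)
  qed
  ultimately have d: "((\<lambda>w. \<Sum>b\<in>Basis. (F w * dF w b) *\<^sub>R b) has_derivative G y) (at y)" by simp
  have e: "(\<Sum>b\<in>Basis. (F w * dF w b) *\<^sub>R b) = legendre F w" if "w \<in> UNIV - {0}" for w
    using leg_eq[of w] that by simp
  show ?thesis
    by (rule has_derivative_transform_within_open[OF d open_S0 _ e]) (use assms in simp_all)
qed

lemma leg_cont: "continuous_on (UNIV - {0}) (legendre F)"
proof -
  have "isCont (legendre F) x" if "x \<in> UNIV - {0}" for x
  proof -
    have "x \<noteq> 0" using that by simp
    then show ?thesis by (rule has_derivative_continuous[OF leg_deriv])
  qed
  then show ?thesis by (simp add: continuous_at_imp_continuous_on)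
qed

lemma leg_hom: assumes "c > 0" shows "legendre F (c *\<^sub>R y) = c *\<^sub>R legendre F y"
proof (cases "y = 0")
  case True then show ?thesis by (simp add: legendre_def)
next
  case False
  then have "c *\<^sub>R y \<noteq> 0" using assms by simp
  then show ?thesis using False assms
    by (simp add: leg_eq homF dF_hom scaleR_sum_right mult.assoc)
qed

lemma leg_zero_iff: "legendre F y = 0 \<longleftrightarrow> y = 0"
proof
  assume "legendre F y = 0"
  then have "(F y)^2 = 0" using leg_inner_self[of y] by simp
  then show "y = 0" using Fpos[of y] by (metis less_irrefl zero_less_power)
qed (simp add: legendre_def)

end

context mink begin

lemma leg_inj_nz:
  assumes y1: "y1 \<noteq> 0" and y2: "y2 \<noteq> 0" and eq: "legendre F y1 = legendre F y2"
  shows "y1 = y2"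
proof (rule ccontr)
  assume ne: "y1 \<noteq> y2"
  define d where "d = y2 - y1"
  have d: "d \<noteq> 0" using ne by (simp add: d_def)
  define \<xi> where "\<xi> = legendre F y1"
  have \<xi>2: "legendre F y2 = \<xi>" using eq by (simp add: \<xi>_def)
  have p1: "inner \<xi> y1 > 0" using leg_inner_self[of y1] Fpos[OF y1] by (simp add: \<xi>_def)
  have p2: "inner \<xi> y2 > 0" using leg_inner_self[of y2] Fpos[OF y2] \<xi>2 by simp
  show False
  proof (cases "\<exists>t\<in>{0..1}. y1 + t *\<^sub>R d = 0")
    case True
    then obtain t where t: "0 \<le> t" "t \<le> 1" "y1 + t *\<^sub>R d = 0" by auto
    have e1: "y1 = - (t *\<^sub>R d)" using t(3) by (simp add: eq_neg_iff_add_eq_0)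
    have e2: "y2 = (1 - t) *\<^sub>R d" using e1 by (simp add: d_def algebra_simps)
    have a1: "- t * inner \<xi> d > 0" using p1 e1 by simp
    have a2: "(1 - t) * inner \<xi> d > 0" using p2 e2 by simp
    have t0: "t \<noteq> 0" using t(3) y1 by auto
    from a1 t t0 have "inner \<xi> d < 0" by (simp add: zero_less_mult_iff mult_less_0_iff)
    moreover from a2 t have "inner \<xi> d > 0" by (simp add: zero_less_mult_iff)
    ultimately show False by simp
  next
    case False
    define q where "q t = inner (legendre F (y1 + t *\<^sub>R d)) d" for t
    have qd: "(q has_real_derivative g (y1 + t *\<^sub>R d) d d) (at t)" if "0 \<le> t" "t \<le> 1" for t
    proof -
      have nz: "y1 + t *\<^sub>R d \<noteq> 0" using False that by auto
      have "((\<lambda>z. inner (legendre F z) d) has_derivative (\<lambda>v. inner (G (y1 + t *\<^sub>R d) v) d)) (at (y1 + t *\<^sub>R d))"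
        by (rule has_derivative_inner_left[OF leg_deriv[OF nz]])
      from line_deriv[OF this] show ?thesis unfolding q_def using G_inner[OF nz] by simp
    qed
    from MVT2[of 0 1 q, OF _ qd] obtain s where s: "0 < s" "s < 1"
      "q 1 - q 0 = (1 - 0) * g (y1 + s *\<^sub>R d) d d" by auto
    have "q 1 = q 0" using \<xi>2 by (simp add: q_def d_def \<xi>_def)
    moreover have "g (y1 + s *\<^sub>R d) d d > 0"
      using g_pos[OF _ d] False s by auto
    ultimately show False using s(3) by simp
  qed
qed

lemma norm_bound: "\<exists>m>0. \<forall>y. m * norm y \<le> F y"
proof -
  obtain b :: 'v where b: "b \<in> Basis" using nonempty_Basis by blast
  have ne: "sphere (0::'v) 1 \<noteq> {}" using b by (auto simp: norm_Basis)
  obtain y0 where y0: "y0 \<in> sphere 0 1" "\<And>y. y \<in> sphere 0 1 \<Longrightarrow> F y0 \<le> F y"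
    using continuous_attains_inf[OF compact_sphere ne continuous_on_subset[OF contF]] by blast
  have "y0 \<noteq> 0" using y0(1) by auto
  then have m: "F y0 > 0" by (rule Fpos)
  have "F y0 * norm y \<le> F y" for y
  proof (cases "y = 0")
    case True then show ?thesis by (simp add: F0)
  next
    case False
    have ny: "norm y > 0" using False by simp
    have "F y0 \<le> F ((1 / norm y) *\<^sub>R y)" using y0(2) False by simp
    also have "\<dots> = F y / norm y" using ny by (simp add: homF)
    finally show ?thesis using ny by (simp add: field_simps)
  qed
  then show ?thesis using m by blast
qed

lemma leg_surj_pt: "\<exists>y. legendre F y = \<xi>"
proof (cases "\<xi> = 0")
  case True then show ?thesis by (intro exI[of _ 0]) (simp add: legendre_def)
next
  case False
  obtain m where m: "m > 0" "\<And>y. m * norm y \<le> F y" using norm_bound by blast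
  define \<phi> where "\<phi> y = (F y)^2 - inner (2 *\<^sub>R \<xi>) y" for y
  define R where "R = 2 * norm \<xi> / m^2"
  have cphi: "continuous_on (cball 0 R) \<phi>"
    unfolding \<phi>_def by (intro continuous_intros continuous_on_subset[OF contF]) auto
  have R0: "R \<ge> 0" unfolding R_def using m(1) by (intro divide_nonneg_pos) auto
  have neK: "cball (0::'v) R \<noteq> {}" using R0 by simp
  obtain y0 where y0: "y0 \<in> cball 0 R" "\<And>y. y \<in> cball 0 R \<Longrightarrow> \<phi> y0 \<le> \<phi> y"
    using continuous_attains_inf[OF compact_cball neK cphi] by blast
  have glob: "\<phi> y0 \<le> \<phi> y" for y
  proof (cases "y \<in> cball 0 R")
    case True then show ?thesis using y0 by blast
  next
    case False
    then have ny: "norm y > R" by simp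
    have "\<phi> y0 \<le> \<phi> 0" using y0(2)[of 0] R0 by simp
    also have "\<phi> 0 = 0" by (simp add: \<phi>_def F0)
    also have "0 < \<phi> y"
    proof -
      have "(m * norm y)^2 \<le> (F y)^2" using m(2)[of y] m(1) by (intro power_mono) auto
      moreover have "inner (2 *\<^sub>R \<xi>) y \<le> 2 * norm \<xi> * norm y"
        using norm_cauchy_schwarz[of \<xi> y] by simp
      moreover have "2 * norm \<xi> * norm y < (m * norm y)^2"
      proof -
        have "2 * norm \<xi> < m^2 * norm y" using ny m(1) by (simp add: R_def field_simps)
        moreover have "norm y > 0" using ny R0 by linarith
        ultimately have "2 * norm \<xi> * norm y < m^2 * norm y * norm y" by simp
        then show ?thesis by (simp add: power2_eq_square algebra_simps)
      qed
      ultimately show ?thesis by (simp add: \<phi>_def)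
    qed
    finally show ?thesis by simp
  qed
  have y0nz: "y0 \<noteq> 0"
  proof
    assume "y0 = 0"
    define t where "t = (norm \<xi>)^2 / (F \<xi>)^2"
    have Fx: "F \<xi> > 0" using Fpos[OF False] .
    have t: "t > 0" using False Fx by (simp add: t_def)
    have tF: "t * (F \<xi>)^2 = (norm \<xi>)^2" using Fx by (simp add: t_def)
    have "\<phi> (t *\<^sub>R \<xi>) = t * (t * (F \<xi>)^2) - 2 * t * (norm \<xi>)^2"
    proof -
      have nn: "norm \<xi> * norm \<xi> = inner \<xi> \<xi>" by (metis power2_norm_eq_inner power2_eq_square)
      show ?thesis using t by (simp add: \<phi>_def homF power2_eq_square nn algebra_simps)
    qed
    also have "\<dots> = - t * (norm \<xi>)^2" by (simp add: tF algebra_simps)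
    also have "\<dots> < 0" using t False by simp
    finally have "\<phi> (t *\<^sub>R \<xi>) < 0" .
    moreover have "\<phi> y0 = 0" using \<open>y0 = 0\<close> by (simp add: \<phi>_def F0)
    ultimately show False using glob[of "t *\<^sub>R \<xi>"] by simp
  qed
  have der: "(\<phi> has_derivative (\<lambda>v. 2 * F y0 * dF y0 v - inner (2 *\<^sub>R \<xi>) v)) (at y0)"
    unfolding \<phi>_def[abs_def]
    by (intro has_derivative_diff dPhi[OF y0nz] has_derivative_inner_right has_derivative_ident)
  have "(\<lambda>v. 2 * F y0 * dF y0 v - inner (2 *\<^sub>R \<xi>) v) = (\<lambda>v. 0)"
    by (rule differential_zero_maxmin[of y0 UNIV]) (use der glob in auto)
  then have z: "2 * F y0 * dF y0 v = inner (2 *\<^sub>R \<xi>) v" for v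
    using fun_cong[of _ _ v] by fastforce
  have "inner (legendre F y0 - \<xi>) v = 0" for v
    using z[of v] leg_inner[OF y0nz, of v] by (simp add: inner_diff_left)
  then have "legendre F y0 = \<xi>" by (metis inner_eq_zero_iff eq_iff_diff_eq_0)
  then show ?thesis by blast
qed

lemma leg_bij: "bij (legendre F)"
proof -
  have "inj (legendre F)"
  proof (rule injI)
    fix x y assume e: "legendre F x = legendre F y"
    show "x = y"
    proof (cases "x = 0 \<or> y = 0")
      case True then show ?thesis using e leg_zero_iff by (metis legendre_def)
    next
      case False then show ?thesis using leg_inj_nz e by blast
    qed
  qed
  moreover have "surj (legendre F)" using leg_surj_pt by (metis surjI)
  ultimately show ?thesis by (simp add: bij_def)
qed

definition h where "h = inv (legendre F)"

lemma h_L: "h (legendre F y) = y"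
  using leg_bij by (simp add: h_def bij_def inv_f_f)
lemma L_h: "legendre F (h \<xi>) = \<xi>"
  using leg_bij by (simp add: h_def bij_def surj_f_inv_f)
lemma h_zero_iff: "h \<xi> = 0 \<longleftrightarrow> \<xi> = 0"
  using L_h leg_zero_iff by metis
lemma h_hom: assumes "c > 0" shows "h (c *\<^sub>R \<xi>) = c *\<^sub>R h \<xi>"
  by (metis L_h h_L leg_hom assms)

lemma dual_eq: "dual_metric F \<xi> = F (h \<xi>)"
  by (simp add: dual_metric_def h_def)
lemma dual_hom: "c > 0 \<Longrightarrow> dual_metric F (c *\<^sub>R \<xi>) = c * dual_metric F \<xi>"
  by (simp add: dual_eq h_hom homF)
lemma dual_pos: "\<xi> \<noteq> 0 \<Longrightarrow> dual_metric F \<xi> > 0"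
  by (simp add: dual_eq Fpos h_zero_iff)

lemma G_bij: "z \<noteq> 0 \<Longrightarrow> bij (G z)"
  using spd_bij G_spd by blast

lemma h_deriv: assumes "\<xi> \<noteq> 0" shows "(h has_derivative inv (G (h \<xi>))) (at \<xi>)"
proof -
  have nz: "h \<xi> \<noteq> 0" using assms h_zero_iff by simp
  have "G (h \<xi>) \<circ> inv (G (h \<xi>)) = id"
    using G_bij[OF nz] by (simp add: bij_def surj_iff)
  from has_derivative_inverse_strong[OF open_S0 _ leg_cont _ leg_deriv[OF nz] this, of h] nz
  show ?thesis by (simp add: h_L L_h)
qed

lemma Psi_eq: "(\<lambda>z. (dual_metric F z)^2) = (\<lambda>z. inner z (h z))"
proof
  fix z show "(dual_metric F z)^2 = inner z (h z)"
    using leg_inner_self[of "h z"] by (simp add: dual_eq L_h)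
qed

lemma Psi_deriv: assumes "\<zeta> \<noteq> 0"
  shows "((\<lambda>z. inner z (h z)) has_derivative (\<lambda>u. 2 * inner u (h \<zeta>))) (at \<zeta>)"
proof -
  have nz: "h \<zeta> \<noteq> 0" using assms h_zero_iff by simp
  have 1: "((\<lambda>z. inner z (h z)) has_derivative (\<lambda>u. inner \<zeta> (inv (G (h \<zeta>)) u) + inner u (h \<zeta>))) (at \<zeta>)"
    by (rule has_derivative_inner[OF has_derivative_ident h_deriv[OF assms]])
  have "inner \<zeta> (inv (G (h \<zeta>)) u) = inner u (h \<zeta>)" for u
  proof -
    define y where "y = h \<zeta>"
    define w where "w = inv (G y) u"
    have Gw: "G y w = u" using G_bij[OF nz] by (simp add: w_def y_def bij_def surj_f_inv_f)
    have "inner \<zeta> w = inner (legendre F y) w" by (simp add: y_def L_h)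
    also have "\<dots> = g y y w" using leg_inner[OF nz] g_yv[OF nz] by (simp add: y_def)
    also have "\<dots> = inner (G y w) y" using G_inner[OF nz] by (simp add: y_def)
    finally show ?thesis using Gw by (simp add: w_def y_def)
  qed
  with 1 show ?thesis by simp
qed

lemma dual_tensor: assumes "\<xi> \<noteq> 0"
  shows "fund_tensor (dual_metric F) \<xi> u v = inner u (inv (G (h \<xi>)) v)"
proof -
  have eq: "frechet_derivative (\<lambda>z. inner z (h z)) (at \<zeta>) u = 2 * inner u (h \<zeta>)"
    if "\<zeta> \<in> UNIV - {0}" for \<zeta>
  proof -
    have "\<zeta> \<noteq> 0" using that by auto
    from frechet_derivative_at[OF Psi_deriv[OF this]] show ?thesis by metis
  qed
  have "((\<lambda>\<zeta>. 2 * inner u (h \<zeta>)) has_derivative (\<lambda>v. 2 * inner u (inv (G (h \<xi>)) v))) (at \<xi>)"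
    by (intro has_derivative_mult_right has_derivative_inner_right h_deriv[OF assms])
  then have "((\<lambda>\<zeta>. frechet_derivative (\<lambda>z. inner z (h z)) (at \<zeta>) u) has_derivative
      (\<lambda>v. 2 * inner u (inv (G (h \<xi>)) v))) (at \<xi>)"
    by (rule has_derivative_transform_within_open[OF _ open_S0]) (use assms eq in auto)
  from frechet_derivative_at[OF this]
  have "hess (\<lambda>z. inner z (h z)) \<xi> u v = 2 * inner u (inv (G (h \<xi>)) v)"
    unfolding hess_def by metis
  then show ?thesis unfolding fund_tensor_def Psi_eq by simp
qed

end

lemma quad_scale: "linear P \<Longrightarrow> inner (P (a *\<^sub>R v)) (a *\<^sub>R v) = a * a * inner (P v) v"
  by (simp add: linear_scale)

context mink begin

lemma dual_one_nz: assumes "dual_metric F \<xi> = 1" shows "\<xi> \<noteq> 0"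
proof
  assume "\<xi> = 0"
  then have "h \<xi> = 0" using h_zero_iff by simp
  then show False using assms F0 dual_eq by simp
qed

lemma dir1:
  assumes x: "dual_metric F \<xi> = 1" and z: "dual_metric F \<zeta> = 1" and e: "dual_metric F \<eta> = 1"
  shows "ereal (fund_tensor (dual_metric F) \<xi> \<eta> \<eta> / fund_tensor (dual_metric F) \<zeta> \<eta> \<eta>)
     \<le> Sup {ereal (fund_tensor F (h \<zeta>) Y Y / fund_tensor F (h \<xi>) Y Y) | Y. F Y = 1}"
    (is "_ \<le> Sup ?S")
proof -
  have \<xi>0: "\<xi> \<noteq> 0" and \<zeta>0: "\<zeta> \<noteq> 0" and \<eta>0: "\<eta> \<noteq> 0" using dual_one_nz x z e by auto
  define X where "X = h \<xi>"
  define Z where "Z = h \<zeta>"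
  have X0: "X \<noteq> 0" and Z0: "Z \<noteq> 0" using \<xi>0 \<zeta>0 h_zero_iff by (auto simp: X_def Z_def)
  have ftF: "fund_tensor F W v v = inner (G W v) v" if "W \<noteq> 0" for W v
    using fund_tensor_eq[OF that] G_inner[OF that] by simp
  define Y0 where "Y0 = h \<eta>"
  have Y0: "F Y0 = 1" "Y0 \<noteq> 0" using e \<eta>0 h_zero_iff by (auto simp: Y0_def dual_eq)
  have r0: "fund_tensor F Z Y0 Y0 / fund_tensor F X Y0 Y0 > 0"
    using g_pos[OF Z0 Y0(2)] g_pos[OF X0 Y0(2)] by (simp add: fund_tensor_eq X0 Z0)
  have "ereal (fund_tensor F Z Y0 Y0 / fund_tensor F X Y0 Y0) \<in> ?S"
    using Y0 by (auto simp: X_def Z_def)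
  then have C0: "ereal (fund_tensor F Z Y0 Y0 / fund_tensor F X Y0 Y0) \<le> Sup ?S" by (rule Sup_upper)
  show ?thesis
  proof (cases "Sup ?S")
    case PInf then show ?thesis by simp
  next
    case MInf then show ?thesis using C0 by simp
  next
    case (real c)
    have c0: "c > 0" using C0 r0 real by simp
    have bnd: "inner (G Z v) v \<le> c * inner (G X v) v" for v
    proof (cases "v = 0")
      case True then show ?thesis using G_lin[OF Z0] G_lin[OF X0] by (simp add: linear_0)
    next
      case False
      define Y where "Y = (1 / F v) *\<^sub>R v"
      have Fv: "F v > 0" using Fpos[OF False] .
      have FY: "F Y = 1" using Fv by (simp add: Y_def homF)
      have Yv: "v = F v *\<^sub>R Y" using Fv by (simp add: Y_def)
      have Y0': "Y \<noteq> 0" using FY F0 by auto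
      have "ereal (fund_tensor F Z Y Y / fund_tensor F X Y Y) \<in> ?S"
        using FY by (auto simp: X_def Z_def)
      then have "ereal (fund_tensor F Z Y Y / fund_tensor F X Y Y) \<le> Sup ?S" by (rule Sup_upper)
      then have "ereal (fund_tensor F Z Y Y / fund_tensor F X Y Y) \<le> ereal c" using real by simp
      then have "inner (G Z Y) Y / inner (G X Y) Y \<le> c" using ftF X0 Z0 by simp
      moreover have "inner (G X Y) Y > 0" using G_spd[OF X0] Y0' unfolding spd_def by blast
      ultimately have "inner (G Z Y) Y \<le> c * inner (G X Y) Y" by (simp add: divide_le_eq)
      then have "F v * F v * inner (G Z Y) Y \<le> F v * F v * (c * inner (G X Y) Y)"
        by (intro mult_left_mono) auto
      then show ?thesis
        using quad_scale[OF G_lin[OF Z0], of "F v" Y] quad_scale[OF G_lin[OF X0], of "F v" Y]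
        by (simp add: Yv[symmetric] algebra_simps)
    qed
    have mono: "inner (inv (G X) \<eta>) \<eta> \<le> c * inner (inv (G Z) \<eta>) \<eta>"
      by (rule spd_inv_mono[OF G_spd[OF Z0] G_spd[OF X0]]) (use c0 bnd in auto)
    have pos: "inner (inv (G Z) \<eta>) \<eta> > 0" using spd_inv[OF G_spd[OF Z0]] \<eta>0 unfolding spd_def by blast
    have "fund_tensor (dual_metric F) \<xi> \<eta> \<eta> / fund_tensor (dual_metric F) \<zeta> \<eta> \<eta>
        = inner (inv (G X) \<eta>) \<eta> / inner (inv (G Z) \<eta>) \<eta>"
      using dual_tensor[OF \<xi>0] dual_tensor[OF \<zeta>0] by (simp add: X_def Z_def inner_commute)
    also have "\<dots> \<le> c" using mono pos by (simp add: divide_le_eq)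
    finally show ?thesis using real by simp
  qed
qed

lemma dir2:
  assumes x: "F X = 1" and y: "F Y = 1" and z: "F Z = 1"
  shows "ereal (fund_tensor F X Y Y / fund_tensor F Z Y Y)
     \<le> Sup {ereal (fund_tensor (dual_metric F) (legendre F Z) \<eta> \<eta> /
                   fund_tensor (dual_metric F) (legendre F X) \<eta> \<eta>) | \<eta>. dual_metric F \<eta> = 1}"
    (is "_ \<le> Sup ?S")
proof -
  have X0: "X \<noteq> 0" and Y0: "Y \<noteq> 0" and Z0: "Z \<noteq> 0" using x y z F0 by auto
  define \<xi> where "\<xi> = legendre F X"
  define \<zeta> where "\<zeta> = legendre F Z"
  have \<xi>0: "\<xi> \<noteq> 0" and \<zeta>0: "\<zeta> \<noteq> 0" using X0 Z0 leg_zero_iff by (auto simp: \<xi>_def \<zeta>_def)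
  have hx: "h \<xi> = X" and hz: "h \<zeta> = Z" by (simp_all add: \<xi>_def \<zeta>_def h_L)
  have ftD: "fund_tensor (dual_metric F) \<omega> v v = inner (inv (G W) v) v" if "\<omega> \<noteq> 0" "h \<omega> = W" for \<omega> W v
    using dual_tensor[OF that(1)] that(2) by (simp add: inner_commute)
  have sX: "spd (inv (G X))" and sZ: "spd (inv (G Z))" using spd_inv G_spd X0 Z0 by auto
  define \<eta>0 where "\<eta>0 = legendre F Y"
  have e0: "dual_metric F \<eta>0 = 1" "\<eta>0 \<noteq> 0" using y Y0 leg_zero_iff by (auto simp: \<eta>0_def dual_eq h_L)
  have "inner (inv (G X) \<eta>0) \<eta>0 > 0" "inner (inv (G Z) \<eta>0) \<eta>0 > 0"
    using sX sZ e0(2) unfolding spd_def by blast+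
  then have r0: "fund_tensor (dual_metric F) \<zeta> \<eta>0 \<eta>0 / fund_tensor (dual_metric F) \<xi> \<eta>0 \<eta>0 > 0"
    by (simp add: ftD[OF \<xi>0 hx] ftD[OF \<zeta>0 hz])
  have "ereal (fund_tensor (dual_metric F) \<zeta> \<eta>0 \<eta>0 / fund_tensor (dual_metric F) \<xi> \<eta>0 \<eta>0) \<in> ?S"
    using e0 by (auto simp: \<xi>_def \<zeta>_def)
  then have C0: "ereal (fund_tensor (dual_metric F) \<zeta> \<eta>0 \<eta>0 / fund_tensor (dual_metric F) \<xi> \<eta>0 \<eta>0) \<le> Sup ?S"
    by (rule Sup_upper)
  show ?thesis
  proof (cases "Sup ?S")
    case PInf then show ?thesis by simp
  next
    case MInf then show ?thesis using C0 by simp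
  next
    case (real c)
    have c0: "c > 0" using C0 r0 real by simp
    have bnd: "inner (inv (G Z) w) w \<le> c * inner (inv (G X) w) w" for w
    proof (cases "w = 0")
      case True then show ?thesis using sX sZ by (simp add: spd_def linear_0)
    next
      case False
      define \<eta> where "\<eta> = (1 / dual_metric F w) *\<^sub>R w"
      have Fw: "dual_metric F w > 0" using dual_pos[OF False] .
      have F\<eta>: "dual_metric F \<eta> = 1" using Fw by (simp add: \<eta>_def dual_hom)
      have wv: "w = dual_metric F w *\<^sub>R \<eta>" using Fw by (simp add: \<eta>_def)
      have \<eta>0': "\<eta> \<noteq> 0" using F\<eta> dual_one_nz by auto
      have "ereal (fund_tensor (dual_metric F) \<zeta> \<eta> \<eta> / fund_tensor (dual_metric F) \<xi> \<eta> \<eta>) \<in> ?S"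
        using F\<eta> by (auto simp: \<xi>_def \<zeta>_def)
      then have "ereal (fund_tensor (dual_metric F) \<zeta> \<eta> \<eta> / fund_tensor (dual_metric F) \<xi> \<eta> \<eta>) \<le> Sup ?S"
        by (rule Sup_upper)
      then have "ereal (fund_tensor (dual_metric F) \<zeta> \<eta> \<eta> / fund_tensor (dual_metric F) \<xi> \<eta> \<eta>) \<le> ereal c"
        using real by simp
      then have "inner (inv (G Z) \<eta>) \<eta> / inner (inv (G X) \<eta>) \<eta> \<le> c"
        by (simp add: ftD[OF \<xi>0 hx] ftD[OF \<zeta>0 hz])
      moreover have "inner (inv (G X) \<eta>) \<eta> > 0" using sX \<eta>0' unfolding spd_def by blast
      ultimately have "inner (inv (G Z) \<eta>) \<eta> \<le> c * inner (inv (G X) \<eta>) \<eta>" by (simp add: divide_le_eq)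
      then have "dual_metric F w * dual_metric F w * inner (inv (G Z) \<eta>) \<eta>
          \<le> dual_metric F w * dual_metric F w * (c * inner (inv (G X) \<eta>) \<eta>)"
        by (intro mult_left_mono) auto
      then show ?thesis
        using quad_scale[of "inv (G Z)" "dual_metric F w" \<eta>] quad_scale[of "inv (G X)" "dual_metric F w" \<eta>]
          sX sZ by (simp add: spd_def wv[symmetric] algebra_simps)
    qed
    have mono: "inner (inv (inv (G X)) Y) Y \<le> c * inner (inv (inv (G Z)) Y) Y"
      by (rule spd_inv_mono[OF sZ sX]) (use c0 bnd in auto)
    then have mono': "inner (G X Y) Y \<le> c * inner (G Z Y) Y"
      using G_bij[OF X0] G_bij[OF Z0] by (simp add: inv_inv_eq)
    have pos: "inner (G Z Y) Y > 0" using G_spd[OF Z0] Y0 unfolding spd_def by blast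
    have "fund_tensor F X Y Y / fund_tensor F Z Y Y = inner (G X Y) Y / inner (G Z Y) Y"
      using fund_tensor_eq[OF X0] fund_tensor_eq[OF Z0] G_inner[OF X0] G_inner[OF Z0] by simp
    also have "\<dots> \<le> c" using mono' pos by (simp add: divide_le_eq)
    finally show ?thesis using real by simp
  qed
qed

end

theorem proposition8p2:
  fixes M :: "'m set" and F :: "'m \<Rightarrow> 'v::euclidean_space \<Rightarrow> real"
  assumes "\<forall>x\<in>M. minkowski_norm (F x)"
    and "uniform_const M F < \<infinity>"
  shows "uniform_const M (\<lambda>x. dual_metric (F x)) = uniform_const M F"
proof -
  let ?A = "{ereal (fund_tensor (F x) X Y Y / fund_tensor (F x) Z Y Y) | x X Y Z.
      x \<in> M \<and> F x X = 1 \<and> F x Y = 1 \<and> F x Z = 1}"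
  let ?B = "{ereal (fund_tensor (dual_metric (F x)) X Y Y / fund_tensor (dual_metric (F x)) Z Y Y) | x X Y Z.
      x \<in> M \<and> dual_metric (F x) X = 1 \<and> dual_metric (F x) Y = 1 \<and> dual_metric (F x) Z = 1}"
  have "Sup ?B \<le> Sup ?A"
  proof (rule Sup_least)
    fix b assume "b \<in> ?B"
    then obtain x \<xi> \<eta> \<zeta> where b: "b = ereal (fund_tensor (dual_metric (F x)) \<xi> \<eta> \<eta> / fund_tensor (dual_metric (F x)) \<zeta> \<eta> \<eta>)"
      and xM: "x \<in> M" and n: "dual_metric (F x) \<xi> = 1" "dual_metric (F x) \<eta> = 1" "dual_metric (F x) \<zeta> = 1"
      by blast
    interpret mink "F x" using assms(1) xM by unfold_locales blast
    have "b \<le> Sup {ereal (fund_tensor (F x) (h \<zeta>) Y Y / fund_tensor (F x) (h \<xi>) Y Y) | Y. F x Y = 1}"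
      unfolding b by (rule dir1[OF n(1) n(3) n(2)])
    also have "\<dots> \<le> Sup ?A"
    proof (rule Sup_subset_mono, rule subsetI)
      fix a assume "a \<in> {ereal (fund_tensor (F x) (h \<zeta>) Y Y / fund_tensor (F x) (h \<xi>) Y Y) | Y. F x Y = 1}"
      then obtain Y where "a = ereal (fund_tensor (F x) (h \<zeta>) Y Y / fund_tensor (F x) (h \<xi>) Y Y)" "F x Y = 1" by blast
      moreover have "F x (h \<zeta>) = 1" "F x (h \<xi>) = 1" using n by (simp_all add: dual_eq)
      ultimately show "a \<in> ?A" using xM by blast
    qed
    finally show "b \<le> Sup ?A" .
  qed
  moreover have "Sup ?A \<le> Sup ?B"
  proof (rule Sup_least)
    fix a assume "a \<in> ?A"
    then obtain x X Y Z where a: "a = ereal (fund_tensor (F x) X Y Y / fund_tensor (F x) Z Y Y)"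
      and xM: "x \<in> M" and n: "F x X = 1" "F x Y = 1" "F x Z = 1"
      by blast
    interpret mink "F x" using assms(1) xM by unfold_locales blast
    let ?S = "{ereal (fund_tensor (dual_metric (F x)) (legendre (F x) Z) \<eta> \<eta> /
                   fund_tensor (dual_metric (F x)) (legendre (F x) X) \<eta> \<eta>) | \<eta>. dual_metric (F x) \<eta> = 1}"
    have "a \<le> Sup ?S" unfolding a by (rule dir2[OF n])
    also have "\<dots> \<le> Sup ?B"
    proof (rule Sup_subset_mono, rule subsetI)
      fix b assume "b \<in> ?S"
      then obtain \<eta> where "b = ereal (fund_tensor (dual_metric (F x)) (legendre (F x) Z) \<eta> \<eta> /
                   fund_tensor (dual_metric (F x)) (legendre (F x) X) \<eta> \<eta>)" "dual_metric (F x) \<eta> = 1" by blast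
      moreover have "dual_metric (F x) (legendre (F x) Z) = 1" "dual_metric (F x) (legendre (F x) X) = 1"
        using n by (simp_all add: dual_eq h_L)
      ultimately show "b \<in> ?B" using xM by blast
    qed
    finally show "a \<le> Sup ?B" .
  qed
  ultimately show ?thesis unfolding uniform_const_def by (rule antisym)
qed

end
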